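(* Let $\mathcal{G}$ be a MAG on vertex set $V$ and let $u$ be any structural imset over $V$ such that $\mathcal{I}_u=\mathcal{I}_{\mathcal{G}}$. Let $c$ be its characteristic imset, $c(S)=1-\sum_{T:\,S\subseteq T\subseteq V}u(T)$. Then $c$ is integer valued and: (i) if $S\in\mathcal{S}(\mathcal{G})$ then $c(S)=1$; (ii) if $S\notin\mathcal{S}(\mathcal{G})$ then $c(S)\le 0$.
   Context: A MAG is an acyclic directed mixed graph (directed and bidirected edges, no directed cycles) with $\mathrm{sib}(v)\cap\mathrm{an}(v)=\emptyset$ for all $v$ and in which every nonadjacent pair is m-separated by some set (a path is m-connecting given $C$ if all its colliders lie in $\mathrm{an}(C)$ and all noncolliders lie outside $C$). $\mathrm{barren}(W)=\{w\in W:\mathrm{de}(w)\cap W=\{w\}\}$; a nonempty $H$ is a head if $\mathrm{barren}(H)=H$ and $H$ lies in one district of $\mathcal{G}_{\mathrm{an}(H)}$; $\mathrm{tail}(H)=(\mathrm{dis}_{\mathrm{an}(H)}(H)\setminus H)\cup\mathrm{pa}(\mathrm{dis}_{\mathrm{an}(H)}(H))$; $\mathcal{S}(\mathcal{G})=\{H\cup A:H\text{ a head},A\subseteq\mathrm{tail}(H)\}$. Imsets are integer functions on $\mathcal{P}(V)$; $\delta_A$ is the indicator of $A$; $u_{\langle A,B|C\rangle}=\delta_{A\cup B\cup C}-\delta_{A\cup C}-\delta_{B\cup C}+\delta_C$ for disjoint $A,B,C$, elementary when $|A|=|B|=1$; combinatorial = nonnegative integer combination of elementary imsets; structural = some positive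 integer multiple is combinatorial. $\langle A,B|C\rangle$ is represented in $u$ if $ku-u_{\langle A,B|C\rangle}$ is combinatorial for some $k\in\mathbb{N}$; $\mathcal{I}_u$ is the set of represented triples; $\mathcal{I}_{\mathcal{G}}$ is the set of triples $\langle A,B|C\rangle$ with $A$ and $B$ m-separated by $C$. *)

theory Defs
  imports Main
begin

text \<open>A mixed graph on a finite vertex set V is given by a set D of directed
edges (p,c) meaning p -> c, and a symmetric set B of bidirected edges
(x,y) meaning x <-> y.\<close>

datatype 'a edge = Dir 'a 'a | Bi 'a 'a

definition edge_in :: "('a \<times> 'a) set \<Rightarrow> ('a \<times> 'a) set \<Rightarrow> 'a edge \<Rightarrow> bool" where
  "edge_in D B e = (case e of Dir x y \<Rightarrow> (x, y) \<in> D | Bi x y \<Rightarrow> (x, y) \<in> B)"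

definition connects :: "'a edge \<Rightarrow> 'a \<Rightarrow> 'a \<Rightarrow> bool" where
  "connects e u v = (case e of Dir x y \<Rightarrow> (x = u \<and> y = v) \<or> (x = v \<and> y = u)
                              | Bi x y \<Rightarrow> (x = u \<and> y = v) \<or> (x = v \<and> y = u))"

definition arrowhead_at :: "'a edge \<Rightarrow> 'a \<Rightarrow> bool" where
  "arrowhead_at e v = (case e of Dir x y \<Rightarrow> v = y | Bi x y \<Rightarrow> v = x \<or> v = y)"

definition anc :: "('a \<times> 'a) set \<Rightarrow> 'a set \<Rightarrow> 'a set" where
  "anc D S = {x. \<exists>s\<in>S. (x, s) \<in> D\<^sup>*}"

definition desc :: "('a \<times> 'a) set \<Rightarrow> 'a \<Rightarrow> 'a set" where
  "desc D w = {x. (w, x) \<in> D\<^sup>*}"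

definition pa :: "('a \<times> 'a) set \<Rightarrow> 'a set \<Rightarrow> 'a set" where
  "pa D S = {p. \<exists>s\<in>S. (p, s) \<in> D}"

definition sib :: "('a \<times> 'a) set \<Rightarrow> 'a \<Rightarrow> 'a set" where
  "sib B v = {w. (v, w) \<in> B}"

definition adjacent :: "('a \<times> 'a) set \<Rightarrow> ('a \<times> 'a) set \<Rightarrow> 'a \<Rightarrow> 'a \<Rightarrow> bool" where
  "adjacent D B a b = ((a, b) \<in> D \<or> (b, a) \<in> D \<or> (a, b) \<in> B \<or> (b, a) \<in> B)"

definition is_path :: "('a \<times> 'a) set \<Rightarrow> ('a \<times> 'a) set \<Rightarrow> 'a \<Rightarrow> 'a \<Rightarrow> 'a list \<Rightarrow> 'a edge list \<Rightarrow> bool" where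
  "is_path D B a b vs es =
     (vs \<noteq> [] \<and> hd vs = a \<and> last vs = b \<and> distinct vs \<and> length es + 1 = length vs \<and>
      (\<forall>i < length es. edge_in D B (es ! i) \<and> connects (es ! i) (vs ! i) (vs ! Suc i)))"

definition collider :: "'a list \<Rightarrow> 'a edge list \<Rightarrow> nat \<Rightarrow> bool" where
  "collider vs es i = (arrowhead_at (es ! (i - 1)) (vs ! i) \<and> arrowhead_at (es ! i) (vs ! i))"

definition m_connecting :: "('a \<times> 'a) set \<Rightarrow> ('a \<times> 'a) set \<Rightarrow> 'a set \<Rightarrow> 'a list \<Rightarrow> 'a edge list \<Rightarrow> bool" where
  "m_connecting D B C vs es =
     (\<forall>i. 0 < i \<and> i < length es \<longrightarrow>
        (collider vs es i \<longrightarrow> vs ! i \<in> anc D C) \<and>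
        (\<not> collider vs es i \<longrightarrow> vs ! i \<notin> C))"

definition m_separated :: "('a \<times> 'a) set \<Rightarrow> ('a \<times> 'a) set \<Rightarrow> 'a set \<Rightarrow> 'a set \<Rightarrow> 'a set \<Rightarrow> bool" where
  "m_separated D B A A' C =
     (\<forall>a\<in>A. \<forall>b\<in>A'. \<forall>vs es. is_path D B a b vs es \<longrightarrow> \<not> m_connecting D B C vs es)"

definition MAG :: "'a set \<Rightarrow> ('a \<times> 'a) set \<Rightarrow> ('a \<times> 'a) set \<Rightarrow> bool" where
  "MAG V D B =
     (finite V \<and> D \<subseteq> V \<times> V \<and> B \<subseteq> V \<times> V \<and> sym B \<and>
      acyclic D \<and>
      (\<forall>v\<in>V. sib B v \<inter> anc D {v} = {}) \<and>
      (\<forall>a\<in>V. \<forall>b\<in>V. a \<noteq> b \<and> \<not> adjacent D B a b \<longrightarrow>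
          (\<exists>C \<subseteq> V - {a, b}. m_separated D B {a} {b} C)))"

definition barren :: "('a \<times> 'a) set \<Rightarrow> 'a set \<Rightarrow> 'a set" where
  "barren D W = {w\<in>W. desc D w \<inter> W = {w}}"

definition district :: "('a \<times> 'a) set \<Rightarrow> 'a set \<Rightarrow> 'a \<Rightarrow> 'a set" where
  "district B W x = {y\<in>W. (x, y) \<in> (B \<inter> (W \<times> W))\<^sup>*}"

definition dis_of :: "('a \<times> 'a) set \<Rightarrow> 'a set \<Rightarrow> 'a set \<Rightarrow> 'a set" where
  "dis_of B W H = (\<Union>h\<in>H. district B W h)"

definition is_head :: "'a set \<Rightarrow> ('a \<times> 'a) set \<Rightarrow> ('a \<times> 'a) set \<Rightarrow> 'a set \<Rightarrow> bool" where
  "is_head V D B H =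
     (H \<noteq> {} \<and> H \<subseteq> V \<and> barren D H = H \<and>
      (\<exists>x\<in>H. H \<subseteq> district B (anc D H) x))"

definition tail :: "('a \<times> 'a) set \<Rightarrow> ('a \<times> 'a) set \<Rightarrow> 'a set \<Rightarrow> 'a set" where
  "tail D B H = (dis_of B (anc D H) H - H) \<union> pa D (dis_of B (anc D H) H)"

definition S_sets :: "'a set \<Rightarrow> ('a \<times> 'a) set \<Rightarrow> ('a \<times> 'a) set \<Rightarrow> 'a set set" where
  "S_sets V D B = {H \<union> A | H A. is_head V D B H \<and> A \<subseteq> tail D B H}"

type_synonym 'a imset = "'a set \<Rightarrow> int"

definition delta :: "'a set \<Rightarrow> 'a imset" where
  "delta X = (\<lambda>S. if S = X then 1 else 0)"

definition semi_imset :: "'a set \<Rightarrow> 'a set \<Rightarrow> 'a set \<Rightarrow> 'a imset" where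
  "semi_imset A A' C = (\<lambda>S. delta (A \<union> A' \<union> C) S - delta (A \<union> C) S - delta (A' \<union> C) S + delta C S)"

definition elem_triples :: "'a set \<Rightarrow> ('a \<times> 'a \<times> 'a set) set" where
  "elem_triples V = {(a, b, C). a \<in> V \<and> b \<in> V \<and> a \<noteq> b \<and> C \<subseteq> V - {a, b}}"

definition elem_imset :: "'a \<times> 'a \<times> 'a set \<Rightarrow> 'a imset" where
  "elem_imset t = (case t of (a, b, C) \<Rightarrow> semi_imset {a} {b} C)"

definition combinatorial :: "'a set \<Rightarrow> 'a imset \<Rightarrow> bool" where
  "combinatorial V u =
     (\<exists>k :: 'a \<times> 'a \<times> 'a set \<Rightarrow> nat.
        \<forall>S. u S = (\<Sum>t\<in>elem_triples V. int (k t) * elem_imset t S))"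

definition structural :: "'a set \<Rightarrow> 'a imset \<Rightarrow> bool" where
  "structural V u = (\<exists>n::nat. n > 0 \<and> combinatorial V (\<lambda>S. int n * u S))"

definition disjoint_triple :: "'a set \<Rightarrow> 'a set \<Rightarrow> 'a set \<Rightarrow> 'a set \<Rightarrow> bool" where
  "disjoint_triple V A A' C =
     (A \<subseteq> V \<and> A' \<subseteq> V \<and> C \<subseteq> V \<and> A \<inter> A' = {} \<and> A \<inter> C = {} \<and> A' \<inter> C = {})"

definition represented :: "'a set \<Rightarrow> 'a imset \<Rightarrow> 'a set \<Rightarrow> 'a set \<Rightarrow> 'a set \<Rightarrow> bool" where
  "represented V u A A' C =
     (\<exists>k::nat. combinatorial V (\<lambda>S. int k * u S - semi_imset A A' C S))"

definition I_imset :: "'a set \<Rightarrow> 'a imset \<Rightarrow> ('a set \<times> 'a set \<times> 'a set) set" where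
  "I_imset V u = {(A, A', C). disjoint_triple V A A' C \<and> represented V u A A' C}"

definition I_graph :: "'a set \<Rightarrow> ('a \<times> 'a) set \<Rightarrow> ('a \<times> 'a) set \<Rightarrow> ('a set \<times> 'a set \<times> 'a set) set" where
  "I_graph V D B = {(A, A', C). disjoint_triple V A A' C \<and> m_separated D B A A' C}"

definition char_imset :: "'a set \<Rightarrow> 'a imset \<Rightarrow> 'a imset" where
  "char_imset V u = (\<lambda>S. 1 - (\<Sum>T\<in>{T. S \<subseteq> T \<and> T \<subseteq> V}. u T))"

end

theory Submission
  imports Defs
begin


lemma connects_sym: "connects e u v = connects e v u"
  by (cases e) (auto simp: connects_def)

lemma edge_cases:
  assumes "edge_in D B e" "connects e u v" "u \<noteq> v" "sym B"
  shows "(arrowhead_at e u \<and> arrowhead_at e v \<and> (u,v) \<in> B) \<or>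
         (\<not> arrowhead_at e u \<and> arrowhead_at e v \<and> (u,v) \<in> D) \<or>
         (arrowhead_at e u \<and> \<not> arrowhead_at e v \<and> (v,u) \<in> D)"
  using assms by (cases e) (auto simp: edge_in_def connects_def arrowhead_at_def sym_def)

lemma is_path_def2:
  "is_path D B a b vs es \<longleftrightarrow> length vs = Suc (length es) \<and> vs!0 = a \<and> vs!(length es) = b \<and> distinct vs \<and>
     (\<forall>i<length es. edge_in D B (es!i) \<and> connects (es!i) (vs!i) (vs!Suc i))"
  unfolding is_path_def
  by (metis (no_types, lifting) One_nat_def add.commute diff_Suc_1 hd_conv_nth last_conv_nth length_0_conv nat.distinct(1) plus_1_eq_Suc)

lemma is_path_rev:
  assumes "is_path D B a b vs es"
  shows "is_path D B b a (rev vs) (rev es)"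
proof -
  let ?n = "length es"
  have L: "length vs = Suc ?n" and d: "distinct vs" and h: "vs!0 = a" "vs!?n = b"
     and E: "\<And>i. i < ?n \<Longrightarrow> edge_in D B (es!i) \<and> connects (es!i) (vs!i) (vs!Suc i)"
    using assms by (auto simp: is_path_def2)
  show ?thesis unfolding is_path_def2
  proof (intro conjI allI impI)
    show "length (rev vs) = Suc (length (rev es))" using L by simp
    show "rev vs ! 0 = b" using L h by (simp add: rev_nth)
    show "rev vs ! length (rev es) = a" using L h by (simp add: rev_nth)
    show "distinct (rev vs)" using d by simp
    fix i assume i: "i < length (rev es)"
    then have i': "?n - Suc i < ?n" by simp
    have "rev es ! i = es ! (?n - Suc i)" using i by (simp add: rev_nth)
    moreover have "rev vs ! i = vs ! Suc (?n - Suc i)" using i L by (simp add: rev_nth Suc_diff_Suc)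
    moreover have "rev vs ! Suc i = vs ! (?n - Suc i)" using i L by (simp add: rev_nth)
    ultimately show "edge_in D B (rev es ! i)" "connects (rev es ! i) (rev vs ! i) (rev vs ! Suc i)"
      using E[OF i'] connects_sym by metis+
  qed
qed

lemma collider_rev:
  assumes "length vs = Suc (length es)" "0 < i" "i < length es"
  shows "collider (rev vs) (rev es) i = collider vs es (length es - i)"
proof -
  let ?n = "length es"
  have 1: "rev es ! (i - 1) = es ! (?n - i)" using assms by (simp add: rev_nth)
  have 2: "rev es ! i = es ! (?n - i - 1)" using assms by (simp add: rev_nth)
  have 3: "rev vs ! i = vs ! (?n - i)" using assms by (simp add: rev_nth)
  show ?thesis unfolding collider_def 1 2 3 by auto
qed

definition Inv :: "('a \<times> 'a) set \<Rightarrow> 'a set \<Rightarrow> 'a set \<Rightarrow> 'a set \<Rightarrow> 'a list \<Rightarrow> 'a edge list \<Rightarrow> bool" where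
 "Inv D Z M Bd vs es = (\<forall>i. 0 < i \<and> i < length es \<longrightarrow>
     (collider vs es i \<longrightarrow> vs!i \<in> M \<and> (vs!i \<notin> anc D Z \<longrightarrow> vs!i \<in> Bd)) \<and>
     (\<not> collider vs es i \<longrightarrow> vs!i \<notin> Z))"

lemma Inv_rev: assumes "Inv D Z M Bd vs es" "length vs = Suc (length es)"
  shows "Inv D Z M Bd (rev vs) (rev es)"
  unfolding Inv_def
proof (intro allI impI)
  fix i assume i: "0 < i \<and> i < length (rev es)"
  let ?j = "length es - i"
  have j: "0 < ?j" "?j < length es" using i by auto
  have c: "collider (rev vs) (rev es) i = collider vs es ?j" using collider_rev assms(2) i by auto
  have v: "rev vs ! i = vs ! ?j" using i assms(2) by (simp add: rev_nth)
  show "(collider (rev vs) (rev es) i \<longrightarrow> rev vs ! i \<in> M \<and> (rev vs ! i \<notin> anc D Z \<longrightarrow> rev vs ! i \<in> Bd)) \<and>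
         (\<not> collider (rev vs) (rev es) i \<longrightarrow> rev vs ! i \<notin> Z)"
    using assms(1) j c v unfolding Inv_def by auto
qed

lemma is_path_drop:
  assumes "is_path D B a b vs es" "j \<le> length es"
  shows "is_path D B (vs!j) b (drop j vs) (drop j es)"
proof -
  have L: "length vs = Suc (length es)" using assms by (simp add: is_path_def2)
  show ?thesis using assms L unfolding is_path_def2 by (auto simp: add.commute[of j])
qed

lemma collider_drop:
  assumes "length vs = Suc (length es)" "j \<le> length es" "0 < p" 
  shows "collider (drop j vs) (drop j es) p = collider vs es (j + p)"
  using assms unfolding collider_def by (simp add: Suc_diff_Suc)

lemma is_path_prepend:
  assumes "is_path D B c b vs es" "c1 \<notin> set vs" "(c, c1) \<in> D"
  shows "is_path D B c1 b (c1 # vs) (Dir c c1 # es)"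
  using assms unfolding is_path_def2
  by (auto simp: edge_in_def connects_def nth_Cons split: nat.splits)

lemma collider_Cons:
  "0 < p \<Longrightarrow> collider (x # vs) (e # es) (Suc p) = collider vs es p"
  by (cases p) (auto simp: collider_def)

lemma Inv_prepend:
  assumes "Inv D Z M Bd vs es" "vs \<noteq> []" "vs!0 = x" "x \<noteq> y" "x \<notin> Z"
  shows "Inv D Z M Bd (y#vs) (Dir x y # es)"
  unfolding Inv_def
proof (intro allI impI)
  fix i assume i: "0 < i \<and> i < length (Dir x y # es)"
  then obtain p where p: "i = Suc p" by (cases i) auto
  show "(collider (y # vs) (Dir x y # es) i \<longrightarrow> (y # vs) ! i \<in> M \<and> ((y # vs) ! i \<notin> anc D Z \<longrightarrow> (y # vs) ! i \<in> Bd)) \<and>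
         (\<not> collider (y # vs) (Dir x y # es) i \<longrightarrow> (y # vs) ! i \<notin> Z)"
  proof (cases "p = 0")
    case True
    then show ?thesis using assms p by (simp add: collider_def arrowhead_at_def)
  next
    case False
    then show ?thesis using assms(1) p i collider_Cons[of p y vs "Dir x y" es] unfolding Inv_def by auto
  qed
qed

lemma is_path_take:
  assumes "is_path D B a b vs es" "k \<le> length es"
  shows "is_path D B a (vs!k) (take (Suc k) vs) (take k es)"
  using assms unfolding is_path_def2 by auto

lemma collider_take:
  assumes "0 < p" "p < k" 
  shows "collider (take (Suc k) vs) (take k es) p = collider vs es p"
  using assms unfolding collider_def by auto

lemma is_path_append:
  assumes "is_path D B a y vs es" "z \<notin> set vs" "edge_in D B e" "connects e y z"
  shows "is_path D B a z (vs @ [z]) (es @ [e])"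
  using assms unfolding is_path_def2
  by (auto simp: nth_append less_Suc_eq)

lemma collider_append:
  assumes "length vs = Suc (length es)" "0 < p" "p < length es"
  shows "collider (vs @ [z]) (es @ [e]) p = collider vs es p"
  using assms unfolding collider_def by (auto simp: nth_append)

lemma collider_append_last:
  assumes "length vs = Suc (length es)" "0 < length es"
  shows "collider (vs @ [z]) (es @ [e]) (length es) = (arrowhead_at (last es) (vs!length es) \<and> arrowhead_at e (vs!length es))"
  using assms unfolding collider_def by (auto simp: nth_append last_conv_nth)




inductive dchain :: "('a \<times> 'a) set \<Rightarrow> 'a \<Rightarrow> 'a list \<Rightarrow> 'a \<Rightarrow> bool" for D where
  dnil: "dchain D x [] x"
| dcons: "(x, y) \<in> D \<Longrightarrow> dchain D y ys z \<Longrightarrow> dchain D x (y # ys) z"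

lemma dchain_rtrancl: "dchain D x ys z \<Longrightarrow> (x,z) \<in> D\<^sup>* \<and> (\<forall>w\<in>set ys. (x,w) \<in> D\<^sup>*)"
  by (induction rule: dchain.induct) (auto intro: converse_rtrancl_into_rtrancl)

lemma dchain_split: "dchain D y (p @ w # q) z \<Longrightarrow> dchain D w q z"
proof (induction p arbitrary: y)
  case Nil
  then show ?case by (auto elim: dchain.cases)
next
  case (Cons a p)
  then show ?case by (auto elim: dchain.cases)
qed

lemma rtrancl_dchain: "(x,z) \<in> D\<^sup>* \<Longrightarrow> \<exists>ys. dchain D x ys z \<and> distinct (x#ys)"
proof (induction rule: converse_rtrancl_induct)
  case base
  then show ?case by (auto intro: dnil)
next
  case (step x y)
  then obtain ys where ys: "dchain D y ys z" "distinct (y#ys)" by blast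
  show ?case
  proof (cases "x = y")
    case True then show ?thesis using ys by blast
  next
    case False
    show ?thesis
    proof (cases "x \<in> set ys")
      case True
      then obtain p q where "ys = p @ x # q" by (meson split_list)
      then show ?thesis using ys dchain_split[of D y p x q z] by auto
    next
      case False
      then show ?thesis using ys step(1) \<open>x \<noteq> y\<close> by (auto intro: dcons)
    qed
  qed
qed

lemma chain_prepend:
  "dchain D c ys a \<Longrightarrow> is_path D B c b vs es \<Longrightarrow> Inv D Z M Bd vs es \<Longrightarrow> set ys \<inter> set vs = {}
   \<Longrightarrow> distinct ys \<Longrightarrow> c \<notin> Z \<Longrightarrow> (\<forall>w\<in>set ys. w \<notin> Z)
   \<Longrightarrow> \<exists>vs' es'. is_path D B a b vs' es' \<and> Inv D Z M Bd vs' es'"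
proof (induction c ys a arbitrary: vs es rule: dchain.induct)
  case (dnil x)
  then show ?case by blast
next
  case (dcons x y ys z)
  have yv: "y \<notin> set vs" using dcons.prems(3) by auto
  have P: "is_path D B y b (y # vs) (Dir x y # es)" using is_path_prepend[OF dcons.prems(1) yv dcons.hyps(1)] .
  have v0: "vs \<noteq> []" "vs!0 = x" using dcons.prems(1) by (auto simp: is_path_def hd_conv_nth)
  have "x \<noteq> y" using yv v0 by (cases vs) auto
  have I: "Inv D Z M Bd (y#vs) (Dir x y # es)" using Inv_prepend[OF dcons.prems(2) v0 \<open>x \<noteq> y\<close> dcons.prems(5)] .
  show ?case
    using dcons.IH[OF P I] dcons.prems by auto
qed

lemma construct:
  assumes P: "is_path D B a b vs es" and I: "Inv D Z M Bd vs es"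
    and i: "0 < i" "i < length es" and xZ: "vs!i \<notin> anc D Z"
    and xa: "(vs!i, a) \<in> D\<^sup>*"
  shows "\<exists>vs' es'. is_path D B a b vs' es' \<and> Inv D Z M (Bd - {vs!i}) vs' es'"
proof -
  define x where "x = vs!i"
  have L: "length vs = Suc (length es)" and dv: "distinct vs" using P by (auto simp: is_path_def2)
  define Suf where "Suf = set (drop i vs)"
  have xS: "x \<in> Suf" unfolding Suf_def x_def using i L
    by (metis Cons_nth_drop_Suc less_Suc_eq list.set_intros(1))
  obtain ys0 where ys0: "dchain D x ys0 a" "distinct (x#ys0)" using rtrancl_dchain[OF xa] x_def by blast
  define Cand where "Cand n = (\<exists>y ys. y \<in> Suf \<and> (x,y) \<in> D\<^sup>* \<and> dchain D y ys a \<and> distinct (y#ys) \<and> length ys = n)" for n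
  have "Cand (length ys0)" unfolding Cand_def using xS ys0 by blast
  then obtain n where n: "Cand n" "\<And>m. m < n \<Longrightarrow> \<not> Cand m" using exists_least_iff[of Cand] by blast
  then obtain y ys where y: "y \<in> Suf" "(x,y) \<in> D\<^sup>*" "dchain D y ys a" "distinct (y#ys)" "length ys = n"
    unfolding Cand_def by blast
  have xw: "\<forall>w\<in>set ys. (x,w) \<in> D\<^sup>*" using dchain_rtrancl[OF y(3)] y(2) by (meson rtrancl_trans)
  have disj: "set ys \<inter> Suf = {}"
  proof (rule ccontr)
    assume "set ys \<inter> Suf \<noteq> {}"
    then obtain w where w: "w \<in> set ys" "w \<in> Suf" by blast
    then obtain p q where pq: "ys = p @ w # q" by (meson split_list)
    have "Cand (length q)" unfolding Cand_def
      using w xw dchain_split[of D y p w q a] y(3,4) pq by auto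
    moreover have "length q < n" using pq y(5) by simp
    ultimately show False using n(2) by blast
  qed
  obtain j where j: "j < length (drop i vs)" "drop i vs ! j = y" using y(1) unfolding Suf_def by (meson in_set_conv_nth)
  define i' where "i' = i + j"
  have i'le: "i' \<le> length es" "i \<le> i'" using j L unfolding i'_def by auto
  have yi': "vs ! i' = y" using j i L unfolding i'_def by simp
  have P0: "is_path D B y b (drop i' vs) (drop i' es)" using is_path_drop[OF P i'le(1)] yi' by simp
  have I0: "Inv D Z M (Bd - {x}) (drop i' vs) (drop i' es)"
    unfolding Inv_def
  proof (intro allI impI)
    fix p assume p: "0 < p \<and> p < length (drop i' es)"
    have c: "collider (drop i' vs) (drop i' es) p = collider vs es (i' + p)" using collider_drop[OF L i'le(1)] p by auto
    have v: "drop i' vs ! p = vs ! (i' + p)" using L i'le by simp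
    have ne: "vs ! (i' + p) \<noteq> x" unfolding x_def using nth_eq_iff_index_eq[OF dv] p i'le L by auto
    have ip: "0 < i' + p \<and> i' + p < length es" using p i'le by auto
    show "(collider (drop i' vs) (drop i' es) p \<longrightarrow> drop i' vs ! p \<in> M \<and> (drop i' vs ! p \<notin> anc D Z \<longrightarrow> drop i' vs ! p \<in> Bd - {x})) \<and>
         (\<not> collider (drop i' vs) (drop i' es) p \<longrightarrow> drop i' vs ! p \<notin> Z)"
      using I ip c v ne unfolding Inv_def by auto
  qed
  have d0: "set ys \<inter> set (drop i' vs) = {}" using disj set_drop_subset_set_drop[OF i'le(2), of vs] unfolding Suf_def by auto
  have notZ: "\<And>w. (x,w) \<in> D\<^sup>* \<Longrightarrow> w \<notin> Z" using xZ unfolding x_def anc_def by auto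
  show ?thesis
    using chain_prepend[OF y(3) P0 I0 d0] y(2,4) xw notZ unfolding x_def by auto
qed

lemma L_main:
  assumes "finite Bd" "is_path D B a b vs es" "Inv D Z (anc D (insert a (insert b Z))) Bd vs es"
  shows "\<exists>vs' es'. is_path D B a b vs' es' \<and> m_connecting D B Z vs' es'"
  using assms
proof (induction "card Bd" arbitrary: Bd a b vs es rule: less_induct)
  case less
  show ?case
  proof (cases "\<exists>i. 0 < i \<and> i < length es \<and> collider vs es i \<and> vs!i \<notin> anc D Z")
    case False
    then have "m_connecting D B Z vs es" using less.prems(3) unfolding Inv_def m_connecting_def by blast
    then show ?thesis using less.prems(2) by blast
  next
    case True
    then obtain i where i: "0 < i" "i < length es" "collider vs es i" "vs!i \<notin> anc D Z" by blast
    define x where "x = vs!i"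
    have xM: "x \<in> anc D (insert a (insert b Z))" and xB: "x \<in> Bd" using less.prems(3) i unfolding Inv_def x_def by auto
    have L: "length vs = Suc (length es)" using less.prems(2) by (simp add: is_path_def2)
    have "(x, a) \<in> D\<^sup>* \<or> (x, b) \<in> D\<^sup>*" using xM i(4) unfolding anc_def x_def by auto
    then obtain vs' es' where P': "is_path D B a b vs' es'" and I': "Inv D Z (anc D (insert a (insert b Z))) (Bd - {x}) vs' es'"
    proof
      assume "(x, a) \<in> D\<^sup>*"
      then show ?thesis using construct[OF less.prems(2,3) i(1,2) i(4)] that unfolding x_def by blast
    next
      assume xb: "(x, b) \<in> D\<^sup>*"
      let ?n = "length es"
      have Pr: "is_path D B b a (rev vs) (rev es)" using is_path_rev[OF less.prems(2)] .
      have Ir: "Inv D Z (anc D (insert b (insert a Z))) Bd (rev vs) (rev es)"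
        using Inv_rev[OF less.prems(3) L] by (simp add: insert_commute)
      have j: "0 < ?n - i" "?n - i < length (rev es)" using i by auto
      have rx: "rev vs ! (?n - i) = x" using i L unfolding x_def by (simp add: rev_nth)
      obtain vs1 es1 where P1: "is_path D B b a vs1 es1" and I1: "Inv D Z (anc D (insert b (insert a Z))) (Bd - {x}) vs1 es1"
        using construct[OF Pr Ir j] rx i(4) xb unfolding x_def by auto
      have L1: "length vs1 = Suc (length es1)" using P1 by (simp add: is_path_def2)
      show ?thesis
        using that is_path_rev[OF P1] Inv_rev[OF I1 L1] by (simp add: insert_commute)
    qed
    have "card (Bd - {x}) < card Bd" using xB less.prems(1) by (meson card_Diff1_less)
    then show ?thesis using less.hyps[OF _ _ P' I'] less.prems(1) by auto
  qed
qed




definition cpath :: "('a \<times> 'a) set \<Rightarrow> ('a \<times> 'a) set \<Rightarrow> 'a set \<Rightarrow> 'a \<Rightarrow> 'a \<Rightarrow> 'a list \<Rightarrow> 'a edge list \<Rightarrow> bool" where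
  "cpath D B M a y vs es = (is_path D B a y vs es \<and> (\<forall>i. 0 < i \<and> i < length es \<longrightarrow> collider vs es i \<and> vs!i \<in> M))"

lemma cpath_step:
  assumes C: "cpath D B M a y vs es" and ee: "es \<noteq> [] \<longrightarrow> arrowhead_at (last es) y"
    and e: "edge_in D B e" "connects e y z" and ey: "es \<noteq> [] \<longrightarrow> arrowhead_at e y \<and> y \<in> M"
  shows "\<exists>vs' es'. cpath D B M a z vs' es' \<and> (arrowhead_at e z \<longrightarrow> es' \<noteq> [] \<longrightarrow> arrowhead_at (last es') z)"
proof -
  have P: "is_path D B a y vs es" and I: "\<forall>i. 0 < i \<and> i < length es \<longrightarrow> collider vs es i \<and> vs!i \<in> M"
    using C unfolding cpath_def by auto
  have L: "length vs = Suc (length es)" and vy: "vs ! length es = y" using P by (auto simp: is_path_def2)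
  show ?thesis
  proof (cases "z \<in> set vs")
    case True
    then obtain k where k: "k < length vs" "vs!k = z" by (meson in_set_conv_nth)
    have kl: "k \<le> length es" using k L by simp
    have P': "is_path D B a z (take (Suc k) vs) (take k es)" using is_path_take[OF P kl] k by simp
    have C': "cpath D B M a z (take (Suc k) vs) (take k es)"
      unfolding cpath_def using P' I collider_take[of _ k vs es] kl by auto
    have E': "take k es \<noteq> [] \<longrightarrow> arrowhead_at (last (take k es)) z"
    proof
      assume ne: "take k es \<noteq> []"
      then have k0: "0 < k" by auto
      show "arrowhead_at (last (take k es)) z"
      proof (cases "k = length es")
        case True
        then show ?thesis using ee ne vy k by auto
      next
        case False
        then have "k < length es" using kl by simp
        then have "collider vs es k" using I k0 by auto
        moreover have "last (take k es) = es ! (k - 1)" using ne k0 \<open>k < length es\<close> by (simp add: last_conv_nth)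
        ultimately show ?thesis using k unfolding collider_def by simp
      qed
    qed
    show ?thesis using C' E' by blast
  next
    case False
    have P': "is_path D B a z (vs @ [z]) (es @ [e])" using is_path_append[OF P False e] .
    have C': "cpath D B M a z (vs @ [z]) (es @ [e])"
      unfolding cpath_def
    proof (rule conjI[OF P'], intro allI impI)
      fix p assume p: "0 < p \<and> p < length (es @ [e])"
      show "collider (vs @ [z]) (es @ [e]) p \<and> (vs @ [z]) ! p \<in> M"
      proof (cases "p < length es")
        case True
        then show ?thesis using collider_append[OF L] I p L by (auto simp: nth_append)
      next
        case False
        then have pe: "p = length es" using p by simp
        then have "es \<noteq> []" using p by auto
        then show ?thesis using collider_append_last[OF L] pe ee ey vy L by (auto simp: nth_append)
      qed
    qed
    show ?thesis apply (rule exI[of _ "vs @ [z]"], rule exI[of _ "es @ [e]"]) using C' by simp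
  qed
qed

lemma cpath_build:
  assumes "(d, d') \<in> (B \<inter> W \<times> W)\<^sup>*"
  shows "W \<subseteq> M \<Longrightarrow> d \<in> W \<Longrightarrow> cpath D B M a d vs es \<Longrightarrow> (es \<noteq> [] \<longrightarrow> arrowhead_at (last es) d)
     \<Longrightarrow> \<exists>vs' es'. cpath D B M a d' vs' es' \<and> (es' \<noteq> [] \<longrightarrow> arrowhead_at (last es') d')"
  using assms
proof (induction rule: rtrancl_induct)
  case base
  then show ?case by blast
next
  case (step y z)
  obtain vs1 es1 where C1: "cpath D B M a y vs1 es1" and E1: "es1 \<noteq> [] \<longrightarrow> arrowhead_at (last es1) y"
    using step.IH step.prems by blast
  have yW: "y \<in> W" "(y,z) \<in> B" using step.hyps(2) by auto
  have "edge_in D B (Bi y z)" "connects (Bi y z) y z" using yW by (auto simp: edge_in_def connects_def)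
  from cpath_step[OF C1 E1 this] show ?case using yW step.prems(1) by (auto simp: arrowhead_at_def)
qed

lemma anc_mono: "X \<subseteq> Y \<Longrightarrow> anc D X \<subseteq> anc D Y"
  unfolding anc_def by auto

lemma anc_self: "X \<subseteq> anc D X"
  unfolding anc_def by auto

lemma A_conn:
  assumes MAG: "MAG V D B" and SS: "S \<in> S_sets V D B" and ab: "a \<in> S" "b \<in> S" "a \<noteq> b"
    and SC: "S \<subseteq> insert a (insert b C)"
  shows "\<exists>vs es. is_path D B a b vs es \<and> m_connecting D B C vs es"
proof -
  have symB: "sym B" using MAG unfolding MAG_def by auto
  obtain H A where HA: "S = H \<union> A" "is_head V D B H" "A \<subseteq> tail D B H" using SS unfolding S_sets_def by blast
  define W where "W = anc D H"
  obtain x where x: "x \<in> H" "H \<subseteq> district B W x" using HA(2) unfolding is_head_def W_def by blast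
  define R where "R = B \<inter> W \<times> W"
  have symR: "sym (R\<^sup>*)" unfolding R_def using symB by (intro sym_rtrancl) (auto simp: sym_def)
  define dis where "dis = dis_of B W H"
  have HW: "H \<subseteq> W" unfolding W_def by (rule anc_self)
  have attach: "\<exists>d. d \<in> dis \<and> (s = d \<or> (s,d) \<in> D)" if s: "s \<in> S" for s
  proof (cases "s \<in> H")
    case True
    then have "s \<in> district B W s" using HW unfolding district_def by auto
    then show ?thesis using True unfolding dis_def dis_of_def by blast
  next
    case False
    then have "s \<in> tail D B H" using s HA by auto
    then show ?thesis unfolding tail_def dis_def W_def pa_def by auto
  qed
  have disW: "dis \<subseteq> W" unfolding dis_def dis_of_def district_def by auto
  have conn: "(d, d') \<in> R\<^sup>*" if dd: "d \<in> dis" "d' \<in> dis" for d d'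
  proof -
    obtain h1 where h1: "h1 \<in> H" "(h1, d) \<in> R\<^sup>*" using dd(1) unfolding dis_def dis_of_def district_def R_def by blast
    obtain h2 where h2: "h2 \<in> H" "(h2, d') \<in> R\<^sup>*" using dd(2) unfolding dis_def dis_of_def district_def R_def by blast
    have "(x, h1) \<in> R\<^sup>*" "(x, h2) \<in> R\<^sup>*" using x h1 h2 unfolding district_def R_def by auto
    then have "(d, h1) \<in> R\<^sup>*" "(h1, x) \<in> R\<^sup>*" using h1 symR by (auto dest: symD)
    then show ?thesis using \<open>(x, h2) \<in> R\<^sup>*\<close> h2 by (meson rtrancl_trans)
  qed
  define M where "M = anc D (insert a (insert b C))"
  have WM: "W \<subseteq> M" unfolding W_def M_def using HA(1) SC by (intro anc_mono) auto
  obtain da where da: "da \<in> dis" "a = da \<or> (a,da) \<in> D" using attach ab(1) by blast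
  obtain db where db: "db \<in> dis" "b = db \<or> (b,db) \<in> D" using attach ab(2) by blast
  have C0: "cpath D B M a a [a] []" unfolding cpath_def is_path_def by auto
  obtain vs1 es1 where C1: "cpath D B M a da vs1 es1" and E1: "es1 \<noteq> [] \<longrightarrow> arrowhead_at (last es1) da"
  proof (cases "a = da")
    case True then show ?thesis using that C0 by blast
  next
    case False
    then have "(a,da) \<in> D" using da by auto
    then have "edge_in D B (Dir a da)" "connects (Dir a da) a da" by (auto simp: edge_in_def connects_def)
    from cpath_step[OF C0 _ this] show ?thesis using that by (auto simp: arrowhead_at_def)
  qed
  obtain vs2 es2 where C2: "cpath D B M a db vs2 es2" and E2: "es2 \<noteq> [] \<longrightarrow> arrowhead_at (last es2) db"
    using cpath_build[OF conn[OF da(1) db(1), unfolded R_def] WM _ C1 E1] da(1) disW by blast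
  obtain vs3 es3 where C3: "cpath D B M a b vs3 es3"
  proof (cases "b = db")
    case True then show ?thesis using that C2 by blast
  next
    case False
    then have "(b,db) \<in> D" using db by auto
    then have "edge_in D B (Dir b db)" "connects (Dir b db) db b" by (auto simp: edge_in_def connects_def)
    from cpath_step[OF C2 E2 this] show ?thesis using that db(1) disW WM by (auto simp: arrowhead_at_def)
  qed
  have P3: "is_path D B a b vs3 es3" using C3 unfolding cpath_def by auto
  have I3: "Inv D C M (set vs3) vs3 es3" using C3 P3 unfolding cpath_def Inv_def is_path_def2 by auto
  show ?thesis using L_main[OF _ P3 I3[unfolded M_def]] by blast
qed




lemma anc_sub_V:
  assumes "D \<subseteq> V \<times> V" "H \<subseteq> V"
  shows "anc D H \<subseteq> V"
proof
  fix x assume "x \<in> anc D H"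
  then obtain s where s: "s \<in> H" "(x,s) \<in> D\<^sup>*" unfolding anc_def by auto
  from s(2) show "x \<in> V"
  proof (cases rule: converse_rtranclE)
    case base then show ?thesis using s assms by auto
  next
    case (step y) then show ?thesis using assms by auto
  qed
qed

lemma anc_anc: "anc D (anc D H) = anc D H"
  unfolding anc_def by (auto intro: rtrancl_trans)

lemma anc_ancestral: "(x,y) \<in> D \<Longrightarrow> y \<in> anc D H \<Longrightarrow> x \<in> anc D H"
  unfolding anc_def by (auto intro: converse_rtrancl_into_rtrancl)

lemma barren_sub: "barren D S \<subseteq> S"
  unfolding barren_def by auto

lemma barren_barren: "barren D (barren D S) = barren D S"
  unfolding barren_def by auto

lemma S_sub_anc_barren:
  assumes "finite D" "acyclic D"
  shows "S \<subseteq> anc D (barren D S)"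
proof
  fix s assume s: "s \<in> S"
  define T where "T = desc D s \<inter> S"
  have sT: "s \<in> T" unfolding T_def desc_def using s by auto
  have wf: "wf ((D\<^sup>+)\<inverse>)"
    using wf_trancl[OF finite_acyclic_wf_converse[OF assms]] by (simp add: trancl_converse)
  obtain m where m: "m \<in> T" "\<And>y. (y, m) \<in> (D\<^sup>+)\<inverse> \<Longrightarrow> y \<notin> T"
    using wfE_min[OF wf sT] by blast
  have "m \<in> barren D S"
    unfolding barren_def
  proof (intro CollectI conjI)
    show "m \<in> S" using m(1) unfolding T_def by auto
    show "desc D m \<inter> S = {m}"
    proof
      show "desc D m \<inter> S \<subseteq> {m}"
      proof
        fix y assume y: "y \<in> desc D m \<inter> S"
        have "(s, m) \<in> D\<^sup>*" using m(1) unfolding T_def desc_def by auto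
        moreover have ym: "(m, y) \<in> D\<^sup>*" using y unfolding desc_def by auto
        ultimately have "y \<in> T" using y unfolding T_def desc_def by (auto intro: rtrancl_trans)
        then have "(m, y) \<notin> D\<^sup>+" using m(2) by auto
        then show "y \<in> {m}" using ym by (auto simp: rtrancl_eq_or_trancl)
      qed
      show "{m} \<subseteq> desc D m \<inter> S" using \<open>m \<in> S\<close> unfolding desc_def by auto
    qed
  qed
  moreover have "(s, m) \<in> D\<^sup>*" using m(1) unfolding T_def desc_def by auto
  ultimately show "s \<in> anc D (barren D S)" unfolding anc_def by auto
qed

lemma NoOut:
  assumes "acyclic D" "h \<in> H" "barren D H = H" "(h,w) \<in> D" "w \<in> anc D H"
  shows False
proof -
  obtain h' where h': "h' \<in> H" "(w,h') \<in> D\<^sup>*" using assms(5) unfolding anc_def by auto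
  have hh: "(h,h') \<in> D\<^sup>+" using assms(4) h'(2) by (meson rtrancl_into_trancl2)
  have "h \<in> barren D H" using assms(2,3) by simp
  then have "desc D h \<inter> H = {h}" unfolding barren_def by auto
  moreover have "h' \<in> desc D h \<inter> H" using hh h' unfolding desc_def by auto
  ultimately have "h' = h" by auto
  then show False using hh assms(1) unfolding acyclic_def by auto
qed

lemma noarrow_D:
  assumes "edge_in D B e" "connects e u v" "\<not> arrowhead_at e u"
  shows "(u,v) \<in> D"
  using assms by (cases e) (auto simp: edge_in_def connects_def arrowhead_at_def)



lemma AncPath:
  assumes fin: "finite D" and ac: "acyclic D" and Wanc: "\<And>x y. (x,y) \<in> D \<Longrightarrow> y \<in> W \<Longrightarrow> x \<in> W"
    and ab: "a \<in> W" "b \<in> W" and CW: "anc D C \<subseteq> W"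
    and P: "is_path D B a b vs es" and MC: "m_connecting D B C vs es"
  shows "set vs \<subseteq> W"
proof (rule ccontr)
  assume "\<not> set vs \<subseteq> W"
  then obtain z0 where z0: "z0 \<in> set vs - W" by auto
  have wf: "wf (D\<inverse>)" using finite_acyclic_wf_converse[OF fin ac] .
  obtain z where z: "z \<in> set vs - W" "\<And>y. (y, z) \<in> D\<inverse> \<Longrightarrow> y \<notin> set vs - W"
    using wfE_min[OF wf z0] by blast
  have L: "length vs = Suc (length es)" and h: "vs!0 = a" "vs!length es = b"
    and E: "\<And>i. i < length es \<Longrightarrow> edge_in D B (es!i) \<and> connects (es!i) (vs!i) (vs!Suc i)"
    using P by (auto simp: is_path_def2)
  obtain i where i: "i < length vs" "vs!i = z" using z(1) by (meson DiffD1 in_set_conv_nth)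
  have i0: "0 < i"
  proof (rule ccontr)
    assume "\<not> 0 < i" then have "z = a" using i h by simp
    then show False using z ab by simp
  qed
  have in_: "i < length es"
  proof (rule ccontr)
    assume "\<not> i < length es" then have "i = length es" using i L by simp
    then have "z = b" using i h by simp
    then show False using z ab by simp
  qed
  have "\<not> collider vs es i"
  proof
    assume "collider vs es i"
    then have "z \<in> anc D C" using MC i0 in_ i unfolding m_connecting_def by auto
    then show False using CW z by auto
  qed
  then have "\<not> arrowhead_at (es!(i-1)) z \<or> \<not> arrowhead_at (es!i) z" using i unfolding collider_def by auto
  then obtain w where w: "w \<in> set vs" "(z, w) \<in> D"
  proof
    assume na: "\<not> arrowhead_at (es!(i-1)) z"
    have c1: "edge_in D B (es!(i-1))" "connects (es!(i-1)) (vs!(i-1)) z"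
      using E[of "i-1"] i0 in_ i by auto
    have c2: "connects (es!(i-1)) z (vs!(i-1))"
      using c1(2) connects_sym by metis
    have "(z, vs!(i-1)) \<in> D" using noarrow_D[OF c1(1) c2 na] .
    moreover have "vs!(i-1) \<in> set vs" using i L by simp
    ultimately show ?thesis using that by blast
  next
    assume na: "\<not> arrowhead_at (es!i) z"
    have e1: "edge_in D B (es!i)" "connects (es!i) z (vs!Suc i)" using E[of i] in_ i by auto
    have "(z, vs!Suc i) \<in> D" using noarrow_D[OF e1 na] .
    moreover have "vs!Suc i \<in> set vs" using in_ L by simp
    ultimately show ?thesis using that by blast
  qed
  have "w \<notin> set vs - W" using z(2)[of w] w(2) by simp
  then have wW: "w \<in> W" using w(1) by simp
  show False using Wanc[OF w(2) wW] z(1) by simp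
qed



lemma DistWalk:
  assumes symB: "sym B" and ac: "acyclic D" and bH: "barren D H = H" and hH: "h \<in> H"
    and P: "is_path D B h t vs es" and VW: "set vs \<subseteq> anc D H"
    and col: "\<And>i. 0 < i \<Longrightarrow> i < length es \<Longrightarrow> collider vs es i" and ne: "es \<noteq> []"
  shows "(\<forall>i<length es. vs!i \<in> district B (anc D H) h) \<and>
         ((vs!(length es - 1), t) \<in> B \<or> (t, vs!(length es - 1)) \<in> D)"
proof -
  let ?W = "anc D H"
  have L: "length vs = Suc (length es)" and h0: "vs!0 = h" and tl: "vs!length es = t" and dv: "distinct vs"
    and E: "\<And>i. i < length es \<Longrightarrow> edge_in D B (es!i) \<and> connects (es!i) (vs!i) (vs!Suc i)"
    using P by (auto simp: is_path_def2)
  have inW: "\<And>i. i < length vs \<Longrightarrow> vs!i \<in> ?W" using VW by auto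
  have neq: "\<And>i. i < length es \<Longrightarrow> vs!i \<noteq> vs!Suc i" using dv L by (simp add: nth_eq_iff_index_eq)
  have D1: "\<forall>i<length es. vs!i \<in> district B ?W h"
  proof (intro allI impI)
    fix i assume "i < length es"
    then show "vs!i \<in> district B ?W h"
    proof (induction i)
      case 0
      then show ?case using h0 inW[of 0] L unfolding district_def by auto
    next
      case (Suc i)
      have IH: "vs!i \<in> district B ?W h" using Suc.IH Suc.prems by simp
      have ei: "edge_in D B (es!i)" "connects (es!i) (vs!i) (vs!Suc i)" using E Suc.prems by auto
      have cS: "collider vs es (Suc i)" using col Suc.prems by simp
      have vW: "vs!Suc i \<in> ?W" using inW L Suc.prems by simp
      have nq: "vs!i \<noteq> vs!Suc i" using neq Suc.prems by simp
      from edge_cases[OF ei nq symB]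
      consider "(vs!i, vs!Suc i) \<in> B" | "\<not> arrowhead_at (es!i) (vs!i) \<and> (vs!i, vs!Suc i) \<in> D" | "\<not> arrowhead_at (es!i) (vs!Suc i)"
        by blast
      then show ?case
      proof cases
        case 1
        then show ?thesis using IH vW unfolding district_def
          by (auto intro: rtrancl_into_rtrancl)
      next
        case 2
        show ?thesis
        proof (cases "i = 0")
          case True
          then show ?thesis using NoOut[OF ac hH bH] 2 h0 vW by auto
        next
          case False
          then have "collider vs es i" using col Suc.prems by simp
          then show ?thesis using 2 unfolding collider_def by auto
        qed
      next
        case 3
        then show ?thesis using cS unfolding collider_def by auto
      qed
    qed
  qed
  let ?k = "length es - 1"
  have k: "?k < length es" "Suc ?k = length es" using ne by auto
  have ek: "edge_in D B (es!?k)" "connects (es!?k) (vs!?k) t" using E[OF k(1)] k tl by auto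
  have neqk: "vs!?k \<noteq> t" using neq[OF k(1)] k tl by auto
  have tW: "t \<in> ?W" using inW L tl by auto
  from edge_cases[OF ek neqk symB]
  consider "(vs!?k, t) \<in> B" | "\<not> arrowhead_at (es!?k) (vs!?k) \<and> (vs!?k, t) \<in> D" | "(t, vs!?k) \<in> D"
    by auto
  then have "(vs!?k, t) \<in> B \<or> (t, vs!?k) \<in> D"
  proof cases
    case 2
    show ?thesis
    proof (cases "?k = 0")
      case True
      then show ?thesis using NoOut[OF ac hH bH] 2 h0 tW by auto
    next
      case False
      then have "collider vs es ?k" using col k by auto
      then show ?thesis using 2 unfolding collider_def by auto
    qed
  qed auto
  then show ?thesis using D1 by blast
qed




lemma SepCore:
  assumes MAG: "MAG V D B" and bH: "barren D H = H" and ab: "a \<in> anc D H" "b \<in> anc D H"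
    and P: "is_path D B a b vs es" and MC: "m_connecting D B (anc D H - {a,b}) vs es"
  shows "set vs \<subseteq> anc D H \<and> (\<forall>i. 0 < i \<and> i < length es \<longrightarrow> collider vs es i)"
proof -
  have fin: "finite D" using MAG unfolding MAG_def by (meson finite_SigmaI finite_subset)
  have ac: "acyclic D" using MAG unfolding MAG_def by auto
  have CW0: "anc D (anc D H - {a,b}) \<subseteq> anc D (anc D H)" by (rule anc_mono) auto
  have CW: "anc D (anc D H - {a,b}) \<subseteq> anc D H" using CW0 by (simp add: anc_anc)
  have Wanc: "\<And>x y. (x,y) \<in> D \<Longrightarrow> y \<in> anc D H \<Longrightarrow> x \<in> anc D H" by (rule anc_ancestral)
  have VW: "set vs \<subseteq> anc D H"
    apply (rule AncPath[OF fin ac])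
    using Wanc ab CW P MC by auto
  have L: "length vs = Suc (length es)" and h: "vs!0 = a" "vs!length es = b" and dv: "distinct vs"
    using P by (auto simp: is_path_def2)
  have "collider vs es i" if i: "0 < i" "i < length es" for i
  proof (rule ccontr)
    assume nc: "\<not> collider vs es i"
    have "vs!i \<notin> anc D H - {a,b}" using MC nc i unfolding m_connecting_def by auto
    moreover have "vs!i \<in> anc D H" using VW i L by auto
    moreover have "vs!i \<noteq> a" "vs!i \<noteq> b" using h i L dv by (auto simp: nth_eq_iff_index_eq)
    ultimately show False by auto
  qed
  then show ?thesis using VW by auto
qed

lemma B_sep:
  assumes MAG: "MAG V D B" and SV: "S \<subseteq> V" and Sne: "S \<noteq> {}" and nS: "S \<notin> S_sets V D B"
  shows "\<exists>a b C. a \<in> S \<and> b \<in> S \<and> a \<noteq> b \<and> C \<subseteq> V - {a,b} \<and> S \<subseteq> insert a (insert b C)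
            \<and> m_separated D B {a} {b} C"
proof -
  have fin: "finite D" using MAG unfolding MAG_def by (meson finite_SigmaI finite_subset)
  have ac: "acyclic D" using MAG unfolding MAG_def by auto
  have symB: "sym B" using MAG unfolding MAG_def by auto
  have DV: "D \<subseteq> V \<times> V" using MAG unfolding MAG_def by auto
  define H where "H = barren D S"
  define W where "W = anc D H"
  have HS: "H \<subseteq> S" unfolding H_def by (rule barren_sub)
  have SW: "S \<subseteq> W" unfolding W_def H_def by (rule S_sub_anc_barren[OF fin ac])
  have bH: "barren D H = H" unfolding H_def by (rule barren_barren)
  have Hne: "H \<noteq> {}" using SW Sne unfolding W_def anc_def by auto
  have WV: "W \<subseteq> V" unfolding W_def using anc_sub_V[OF DV] HS SV by auto
  have HW: "H \<subseteq> W" unfolding W_def by (rule anc_self)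
  show ?thesis
  proof (cases "is_head V D B H")
    case False
    then have nh: "\<not> (\<exists>x\<in>H. H \<subseteq> district B W x)" using Hne HS SV bH unfolding is_head_def W_def by auto
    obtain a where a: "a \<in> H" using Hne by auto
    then obtain b where b: "b \<in> H" "b \<notin> district B W a" using nh by auto
    have aW: "a \<in> W" using a HW by auto
    have "a \<in> district B W a" using aW unfolding district_def by auto
    then have ab: "a \<noteq> b" using b by auto
    define C where "C = W - {a,b}"
    have sep: "m_separated D B {a} {b} C"
      unfolding m_separated_def
    proof (intro ballI allI impI notI)
      fix a' b' vs es
      assume a': "a' \<in> {a}" and b': "b' \<in> {b}" and P: "is_path D B a' b' vs es" and MC: "m_connecting D B C vs es"
      have P: "is_path D B a b vs es" using P a' b' by auto
      have core: "set vs \<subseteq> anc D H" "\<forall>i. 0 < i \<and> i < length es \<longrightarrow> collider vs es i"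
        using SepCore[OF MAG bH _ _ P] MC aW HW b unfolding C_def W_def by auto
      have ne: "es \<noteq> []" using P ab by (auto simp: is_path_def2)
      have DW: "(\<forall>i<length es. vs!i \<in> district B (anc D H) a) \<and>
         ((vs!(length es - 1), b) \<in> B \<or> (b, vs!(length es - 1)) \<in> D)"
        using DistWalk[OF symB ac bH a P core(1) _ ne] core(2) by auto
      let ?u = "vs!(length es - 1)"
      have u: "?u \<in> district B W a" using DW ne unfolding W_def by auto
      have bW: "b \<in> W" using b HW by auto
      show False
        using DW
      proof
        assume "(?u, b) \<in> B \<or> (b, ?u) \<in> D"
        then show False
        proof
          assume "(?u, b) \<in> B"
          then have "b \<in> district B W a" using u bW unfolding district_def by (auto intro: rtrancl_into_rtrancl)
          then show False using b by auto
        next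
          assume "(b, ?u) \<in> D"
          then show False using NoOut[OF ac b(1) bH] u unfolding district_def W_def by auto
        qed
      qed
    qed
    show ?thesis
      apply (rule exI[of _ a], rule exI[of _ b], rule exI[of _ C])
      using a b HS ab SW WV sep unfolding C_def by auto
  next
    case True
    have "\<not> (S - H \<subseteq> tail D B H)"
    proof
      assume "S - H \<subseteq> tail D B H"
      then have "S \<in> S_sets V D B" unfolding S_sets_def using True HS by (intro CollectI exI[of _ H] exI[of _ "S - H"]) auto
      then show False using nS by auto
    qed
    then obtain s where s: "s \<in> S" "s \<notin> H" "s \<notin> tail D B H" by auto
    obtain h where h: "h \<in> H" using Hne by auto
    have sh: "s \<noteq> h" using s h by auto
    have sW: "s \<in> W" "h \<in> W" using s SW h HW by auto
    define C where "C = W - {s,h}"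
    have sep: "m_separated D B {s} {h} C"
      unfolding m_separated_def
    proof (intro ballI allI impI notI)
      fix a' b' vs es
      assume a': "a' \<in> {s}" and b': "b' \<in> {h}" and P: "is_path D B a' b' vs es" and MC: "m_connecting D B C vs es"
      have P: "is_path D B s h vs es" using P a' b' by auto
      have core: "set vs \<subseteq> anc D H" "\<forall>i. 0 < i \<and> i < length es \<longrightarrow> collider vs es i"
        using SepCore[OF MAG bH _ _ P] MC sW unfolding C_def W_def by auto
      have L: "length vs = Suc (length es)" using P by (simp add: is_path_def2)
      have Pr: "is_path D B h s (rev vs) (rev es)" using is_path_rev[OF P] .
      have colr: "collider (rev vs) (rev es) i" if "0 < i" "i < length (rev es)" for i
        using collider_rev[OF L] that core(2) by auto
      have ne: "rev es \<noteq> []" using P sh by (auto simp: is_path_def2)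
      have DW: "(\<forall>i<length (rev es). rev vs!i \<in> district B (anc D H) h) \<and>
         ((rev vs!(length (rev es) - 1), s) \<in> B \<or> (s, rev vs!(length (rev es) - 1)) \<in> D)"
        using DistWalk[OF symB ac bH h Pr _ colr ne] core(1) by auto
      let ?u = "rev vs!(length (rev es) - 1)"
      have u: "?u \<in> district B W h" using DW ne unfolding W_def by auto
      then have udis: "?u \<in> dis_of B (anc D H) H" using h unfolding dis_of_def W_def by auto
      show False
        using DW
      proof
        assume "(?u, s) \<in> B \<or> (s, ?u) \<in> D"
        then show False
        proof
          assume "(?u, s) \<in> B"
          then have "s \<in> district B W h" using u sW unfolding district_def by (auto intro: rtrancl_into_rtrancl)
          then have "s \<in> tail D B H" using h s(2) unfolding tail_def dis_of_def W_def by auto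
          then show False using s by auto
        next
          assume "(s, ?u) \<in> D"
          then have "s \<in> tail D B H" using udis unfolding tail_def pa_def by auto
          then show False using s by auto
        qed
      qed
    qed
    show ?thesis
      apply (rule exI[of _ s], rule exI[of _ h], rule exI[of _ C])
      using s h HS sh SW WV sep unfolding C_def by auto
  qed
qed




lemma sum_delta: "finite Q \<Longrightarrow> (\<Sum>T\<in>Q. delta X T) = (if X \<in> Q then 1 else 0)"
  unfolding delta_def by (simp add: sum.delta)

lemma finite_Q: "finite V \<Longrightarrow> finite {T. S \<subseteq> T \<and> T \<subseteq> V}"
  by (rule finite_subset[of _ "Pow V"]) auto

lemma sum_semi:
  assumes V: "finite V" "a \<in> V" "b \<in> V" "a \<noteq> b" "C \<subseteq> V - {a,b}" "S \<subseteq> V"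
  shows "(\<Sum>T\<in>{T. S \<subseteq> T \<and> T \<subseteq> V}. semi_imset {a} {b} C T)
           = (if a \<in> S \<and> b \<in> S \<and> S \<subseteq> insert a (insert b C) then 1 else 0)"
proof -
  let ?Q = "{T. S \<subseteq> T \<and> T \<subseteq> V}"
  have f: "finite ?Q" using finite_Q[OF V(1)] .
  have "(\<Sum>T\<in>?Q. semi_imset {a} {b} C T) =
     (\<Sum>T\<in>?Q. delta ({a} \<union> {b} \<union> C) T) - (\<Sum>T\<in>?Q. delta ({a} \<union> C) T) - (\<Sum>T\<in>?Q. delta ({b} \<union> C) T) + (\<Sum>T\<in>?Q. delta C T)"
    unfolding semi_imset_def by (simp add: sum.distrib sum_subtractf)
  also have "\<dots> = (if S \<subseteq> insert a (insert b C) then 1 else 0) - (if S \<subseteq> insert a C then 1 else 0)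
       - (if S \<subseteq> insert b C then 1 else 0) + (if S \<subseteq> C then 1 else 0)"
  proof -
    have m1: "({a} \<union> {b} \<union> C \<in> ?Q) = (S \<subseteq> insert a (insert b C))" using V by auto
    have m2: "({a} \<union> C \<in> ?Q) = (S \<subseteq> insert a C)" using V by auto
    have m3: "({b} \<union> C \<in> ?Q) = (S \<subseteq> insert b C)" using V by auto
    have m4: "(C \<in> ?Q) = (S \<subseteq> C)" using V by auto
    show ?thesis by (simp only: sum_delta[OF f] m1 m2 m3 m4)
  qed
  also have "\<dots> = (if a \<in> S \<and> b \<in> S \<and> S \<subseteq> insert a (insert b C) then 1 else 0)"
  proof -
    have aC: "a \<notin> C" "b \<notin> C" using V by auto
    show ?thesis using aC V(4) by (cases "a \<in> S"; cases "b \<in> S") (auto simp: subset_insert_iff)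
  qed
  finally show ?thesis .
qed

lemma elem_sum_nonneg:
  assumes "finite V" "t \<in> elem_triples V" "S \<subseteq> V"
  shows "0 \<le> (\<Sum>T\<in>{T. S \<subseteq> T \<and> T \<subseteq> V}. elem_imset t T)"
proof -
  obtain a b C where t: "t = (a,b,C)" by (cases t) auto
  show ?thesis using assms sum_semi[of V a b C S] unfolding t elem_triples_def elem_imset_def by auto
qed

lemma finite_elem_triples: "finite V \<Longrightarrow> finite (elem_triples V)"
  by (rule finite_subset[of _ "V \<times> V \<times> Pow V"]) (auto simp: elem_triples_def)

lemma sum_swap_comb:
  assumes "finite V" "\<forall>S. w S = (\<Sum>t\<in>elem_triples V. int (k t) * elem_imset t S)"
  shows "(\<Sum>T\<in>{T. S \<subseteq> T \<and> T \<subseteq> V}. w T) = (\<Sum>t\<in>elem_triples V. int (k t) * (\<Sum>T\<in>{T. S \<subseteq> T \<and> T \<subseteq> V}. elem_imset t T))"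
  using assms by (simp add: sum.swap[of _ "{T. S \<subseteq> T \<and> T \<subseteq> V}"] sum_distrib_left)

lemma comb_nonneg:
  assumes "finite V" "S \<subseteq> V" "combinatorial V w"
  shows "0 \<le> (\<Sum>T\<in>{T. S \<subseteq> T \<and> T \<subseteq> V}. w T)"
proof -
  obtain k where k: "\<forall>S. w S = (\<Sum>t\<in>elem_triples V. int (k t) * elem_imset t S)" using assms(3) unfolding combinatorial_def by blast
  show ?thesis unfolding sum_swap_comb[OF assms(1) k]
    using elem_sum_nonneg[OF assms(1) _ assms(2)] by (intro sum_nonneg) auto
qed

theorem proposition3p12:
  fixes V :: "'a set" and D B :: "('a \<times> 'a) set" and u :: "'a set \<Rightarrow> int"
  assumes "MAG V D B"
    and "structural V u"
    and "I_imset V u = I_graph V D B"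
  shows "\<forall>S. S \<subseteq> V \<longrightarrow>
           (S \<in> S_sets V D B \<longrightarrow> char_imset V u S = 1) \<and>
           (S \<noteq> {} \<and> S \<notin> S_sets V D B \<longrightarrow> char_imset V u S \<le> 0)"
proof (intro allI impI conjI)
  fix S assume SV: "S \<subseteq> V"
  have finV: "finite V" using assms(1) unfolding MAG_def by auto
  let ?Q = "{T. S \<subseteq> T \<and> T \<subseteq> V}"
  have fQ: "finite ?Q" using finite_Q[OF finV] .
  have sepI: "(a, b, C) \<in> elem_triples V \<Longrightarrow> m_separated D B {a} {b} C \<Longrightarrow> represented V u {a} {b} C" for a b C
  proof -
    assume t: "(a, b, C) \<in> elem_triples V" and ms: "m_separated D B {a} {b} C"
    have "({a}, {b}, C) \<in> I_graph V D B" using t ms unfolding I_graph_def elem_triples_def disjoint_triple_def by auto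
    then have "({a}, {b}, C) \<in> I_imset V u" using assms(3) by simp
    then show ?thesis unfolding I_imset_def by simp
  qed
  {
    assume SS: "S \<in> S_sets V D B"
    obtain n where n: "n > 0" "combinatorial V (\<lambda>S. int n * u S)" using assms(2) unfolding structural_def by blast
    obtain k where k: "\<forall>S. int n * u S = (\<Sum>t\<in>elem_triples V. int (k t) * elem_imset t S)"
      using n(2) unfolding combinatorial_def by blast
    have k': "\<forall>S. (\<lambda>S. int n * u S) S = (\<Sum>t\<in>elem_triples V. int (k t) * elem_imset t S)" using k by simp
    have zero: "int (k t) * (\<Sum>T\<in>?Q. elem_imset t T) = 0" if t: "t \<in> elem_triples V" for t
    proof -
      obtain a b C where tt: "t = (a,b,C)" by (cases t) auto
      have abC: "a \<in> V" "b \<in> V" "a \<noteq> b" "C \<subseteq> V - {a,b}" using t unfolding tt elem_triples_def by auto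
      have es: "(\<Sum>T\<in>?Q. elem_imset t T) = (if a \<in> S \<and> b \<in> S \<and> S \<subseteq> insert a (insert b C) then 1 else 0)"
        unfolding tt elem_imset_def using sum_semi[OF finV abC SV] by simp
      show ?thesis
      proof (cases "a \<in> S \<and> b \<in> S \<and> S \<subseteq> insert a (insert b C) \<and> k t > 0")
        case False
        then show ?thesis using es by auto
      next
        case True
        have rep: "represented V u {a} {b} C"
          unfolding represented_def combinatorial_def
        proof (intro exI[of _ n] exI[of _ "k(t := k t - 1)"] allI)
          fix S'
          have fE: "finite (elem_triples V)" using finite_elem_triples[OF finV] .
          have "(\<Sum>t'\<in>elem_triples V. int ((k(t := k t - 1)) t') * elem_imset t' S')
              = int (k t - 1) * elem_imset t S' + (\<Sum>t'\<in>elem_triples V - {t}. int (k t') * elem_imset t' S')"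
            using sum.remove[OF fE t, of "\<lambda>t'. int ((k(t := k t - 1)) t') * elem_imset t' S'"] by simp
          moreover have "(\<Sum>t'\<in>elem_triples V. int (k t') * elem_imset t' S')
              = int (k t) * elem_imset t S' + (\<Sum>t'\<in>elem_triples V - {t}. int (k t') * elem_imset t' S')"
            using sum.remove[OF fE t] by simp
          moreover have "int (k t - 1) = int (k t) - 1" using True by auto
          moreover have "elem_imset t S' = semi_imset {a} {b} C S'" unfolding tt elem_imset_def by simp
          ultimately show "int n * u S' - semi_imset {a} {b} C S' = (\<Sum>t'\<in>elem_triples V. int ((k(t := k t - 1)) t') * elem_imset t' S')"
            using k by (simp add: algebra_simps)
        qed
        then have "({a}, {b}, C) \<in> I_imset V u" unfolding I_imset_def disjoint_triple_def using abC by auto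
        then have "m_separated D B {a} {b} C" using assms(3) unfolding I_graph_def by auto
        moreover obtain vs es where "is_path D B a b vs es" "m_connecting D B C vs es"
          using A_conn[OF assms(1) SS _ _ abC(3)] True by blast
        ultimately show ?thesis unfolding m_separated_def by auto
      qed
    qed
    have "int n * (\<Sum>T\<in>?Q. u T) = (\<Sum>T\<in>?Q. int n * u T)" by (simp add: sum_distrib_left)
    also have "\<dots> = (\<Sum>t\<in>elem_triples V. int (k t) * (\<Sum>T\<in>?Q. elem_imset t T))"
      using sum_swap_comb[OF finV k'] by simp
    also have "\<dots> = 0" using zero by (intro sum.neutral) blast
    finally have "(\<Sum>T\<in>?Q. u T) = 0" using n(1) by simp
    then show "char_imset V u S = 1" unfolding char_imset_def by simp
  }
  {
    assume "S \<noteq> {} \<and> S \<notin> S_sets V D B"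
    then obtain a b C where abC: "a \<in> S" "b \<in> S" "a \<noteq> b" "C \<subseteq> V - {a,b}" "S \<subseteq> insert a (insert b C)"
      "m_separated D B {a} {b} C"
      using B_sep[OF assms(1) SV] by blast
    have t: "(a,b,C) \<in> elem_triples V" using abC SV unfolding elem_triples_def by auto
    obtain kk where kk: "combinatorial V (\<lambda>S. int kk * u S - semi_imset {a} {b} C S)"
      using sepI[OF t abC(6)] unfolding represented_def by blast
    have "0 \<le> (\<Sum>T\<in>?Q. int kk * u T - semi_imset {a} {b} C T)" using comb_nonneg[OF finV SV kk] by simp
    also have "\<dots> = int kk * (\<Sum>T\<in>?Q. u T) - 1"
      using sum_semi[of V a b C S] finV abC SV t unfolding elem_triples_def
      by (simp add: sum_subtractf sum_distrib_left)
    finally have ge: "1 \<le> int kk * (\<Sum>T\<in>?Q. u T)" by simp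
    have "1 \<le> (\<Sum>T\<in>?Q. u T)"
    proof (rule ccontr)
      assume "\<not> 1 \<le> (\<Sum>T\<in>?Q. u T)"
      then have "int kk * (\<Sum>T\<in>?Q. u T) \<le> 0" by (simp add: mult_nonneg_nonpos)
      then show False using ge by simp
    qed
    then show "char_imset V u S \<le> 0" unfolding char_imset_def by simp
  }
qed


end
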